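(* Let $A,B,C$ be nonzero integers, $f(X)=AX+B+\frac{C}{X}$, and let $T$ be an indeterminate. Then, in $\mathbb{Q}(T)$, the triple \[(x,y,z)=\left(T,\ -\frac{(AT^2+BT+C)B}{(AT^2+(B+1)T+C)A},\ -\frac{(AT^2+(B+1)T+C)C}{BT}\right)\] satisfies $f(x)f(y)=f(z)$, as does the triple \[(x,y,z)=\left(T,\ -\frac{(AT^2+(B+1)T+C)C}{(AT^2+BT+C)B},\ -\frac{(AT^2+(B+1)T+C)C}{BT}\right).\] *)

theory Defs
  imports "HOL-Computational_Algebra.Polynomial" "HOL-Computational_Algebra.Fraction_Field"
begin

type_synonym ratfun = "rat poly fract"

definition indetT :: ratfun where
  "indetT = Fract [:0, 1:] 1"

definition fA :: "int \<Rightarrow> int \<Rightarrow> int \<Rightarrow> ratfun \<Rightarrow> ratfun" where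
  "fA A B C X = of_int A * X + of_int B + of_int C / X"

end

theory Submission imports Defs begin
lemma fzl:
  fixes t a b c P Q :: "'a::field"
  assumes "t\<noteq>0" "a\<noteq>0" "b\<noteq>0" "c\<noteq>0" "P\<noteq>0" "Q\<noteq>0" "Q = P + t"
  shows "a*(- (Q * c) / (b * t)) + b + c/(- (Q * c) / (b * t)) = b*P/Q - a*c*Q/(b*t)"
proof -
  have e4: "c/(- (Q * c) / (b * t)) = - (b*t/Q)" using assms(1-6) by (simp add: field_simps)
  have e5: "a*(- (Q * c) / (b * t)) = - (a*c*Q/(b*t))" using assms(1-6) by (simp add: field_simps)
  have e6: "b - b*t/Q = b*P/Q" using assms(6,7) by (simp add: field_simps)
  show ?thesis
    unfolding e4 e5 using e6 by (simp add: algebra_simps)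
qed

lemma gen1:
  fixes t a b c P Q :: "'a::field"
  assumes "t\<noteq>0" "a\<noteq>0" "b\<noteq>0" "c\<noteq>0" "P\<noteq>0" "Q\<noteq>0" "Q = P + t" "P = a*t^2+b*t+c"
  shows "(a*t+b+c/t) * (a*(- (P * b) / (Q * a))+b+c/(- (P * b) / (Q * a)))
   = a*(- (Q * c) / (b * t)) + b + c/(- (Q * c) / (b * t))"
proof -
  have ft: "a*t+b+c/t = P/t" using assms(1,8) by (simp add: field_simps power2_eq_square)
  have e1: "c/(- (P * b) / (Q * a)) = - (a*c*Q/(P*b))" using assms(1-6) by (simp add: field_simps)
  have e2: "a*(- (P * b) / (Q * a)) = - (P*b/Q)" using assms(1-6) by (simp add: field_simps)
  have e3: "- (P*b/Q) + b = b*t/Q" using assms(6,7) by (simp add: field_simps)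
  have fy: "a*(- (P * b) / (Q * a))+b+c/(- (P * b) / (Q * a)) = b*t/Q - a*c*Q/(P*b)"
    unfolding e1 e2 e3 by simp
  have e4: "c/(- (Q * c) / (b * t)) = - (b*t/Q)" using assms(1-6) by (simp add: field_simps)
  have e5: "a*(- (Q * c) / (b * t)) = - (a*c*Q/(b*t))" using assms(1-6) by (simp add: field_simps)
  have e6: "b - b*t/Q = b*P/Q" using assms(6,7) by (simp add: field_simps)
  have fz: "a*(- (Q * c) / (b * t)) + b + c/(- (Q * c) / (b * t)) = b*P/Q - a*c*Q/(b*t)"
    unfolding e4 e5 using e6 by (simp add: algebra_simps)
  show ?thesis unfolding ft fy fz using assms(1-6) by (simp add: field_simps)
qed
lemma gen2:
  fixes t a b c P Q :: "'a::field"
  assumes "t\<noteq>0" "a\<noteq>0" "b\<noteq>0" "c\<noteq>0" "P\<noteq>0" "Q\<noteq>0" "Q = P + t" "P = a*t^2+b*t+c"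
  shows "(a*t+b+c/t) * (a*(- (Q * c) / (P * b))+b+c/(- (Q * c) / (P * b)))
   = a*(- (Q * c) / (b * t)) + b + c/(- (Q * c) / (b * t))"
proof -
  have ft: "a*t+b+c/t = P/t" using assms(1,8) by (simp add: field_simps power2_eq_square)
  have e1: "c/(- (Q * c) / (P * b)) = - (P*b/Q)" using assms(1-6) by (simp add: field_simps)
  have e2: "a*(- (Q * c) / (P * b)) = - (a*c*Q/(P*b))" using assms(1-6) by (simp add: field_simps)
  have e3: "- (P*b/Q) + b = b*t/Q" using assms(6,7) by (simp add: field_simps)
  have fy: "a*(- (Q * c) / (P * b))+b+c/(- (Q * c) / (P * b)) = b*t/Q - a*c*Q/(P*b)"
    unfolding e1 e2 e3[symmetric] by (simp only: diff_conv_add_uminus ac_simps)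
  have fz: "a*(- (Q * c) / (b * t)) + b + c/(- (Q * c) / (b * t)) = b*P/Q - a*c*Q/(b*t)"
    using assms(1-7) by (rule fzl)
  show ?thesis unfolding ft fy fz using assms(1-6) by (simp add: field_simps)
qed

lemma fract_poly_nz: "(Fract (p::rat poly) 1 = 0) = (p = 0)"
  by (simp add: eq_fract Zero_fract_def)

lemma of_int_fr: "(of_int k :: ratfun) = Fract [:of_int k:] 1"
  by (cases k rule: int_cases2) (simp_all add: of_nat_fract of_nat_poly minus_fract)

theorem mainTheorem5:
  fixes A B C :: int
  assumes "A \<noteq> 0" and "B \<noteq> 0" and "C \<noteq> 0"
  shows "(let T = indetT;
              a = of_int A; b = of_int B; c = of_int C;
              x = T;
              y = - ((a * T^2 + b * T + c) * b) / ((a * T^2 + (b + 1) * T + c) * a);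
              z = - ((a * T^2 + (b + 1) * T + c) * c) / (b * T)
          in fA A B C x * fA A B C y = fA A B C z)
       \<and> (let T = indetT;
              a = of_int A; b = of_int B; c = of_int C;
              x = T;
              y = - ((a * T^2 + (b + 1) * T + c) * c) / ((a * T^2 + b * T + c) * b);
              z = - ((a * T^2 + (b + 1) * T + c) * c) / (b * T)
          in fA A B C x * fA A B C y = fA A B C z)"
proof -
  define T where "T = indetT"
  define a b c where "a = (of_int A :: ratfun)" and "b = (of_int B :: ratfun)" and "c = (of_int C :: ratfun)"
  define P where "P = a * T^2 + b * T + c"
  define Q where "Q = a * T^2 + (b + 1) * T + c"
  have hom: "\<And>p q. Fract (p::rat poly) 1 + Fract q 1 = Fract (p+q) 1"
    "\<And>p q. Fract (p::rat poly) 1 * Fract q 1 = Fract (p*q) 1"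
    "\<And>k. (of_int k :: ratfun) = Fract [:of_int k:] 1"
    "(1::ratfun) = Fract 1 1"
    by (simp_all add: One_fract_def of_int_fr)
  have Tf: "T = Fract [:0,1:] 1" unfolding T_def indetT_def ..
  have Pf: "P = Fract [:of_int C, of_int B, of_int A:] 1"
    unfolding P_def a_def b_def c_def Tf power2_eq_square hom by simp
  have Qf: "Q = Fract [:of_int C, of_int B + 1, of_int A:] 1"
    unfolding Q_def a_def b_def c_def Tf power2_eq_square hom by (simp add: one_pCons)
  have nz: "T \<noteq> 0" "a \<noteq> 0" "b \<noteq> 0" "c \<noteq> 0" "P \<noteq> 0" "Q \<noteq> 0"
    unfolding Tf Pf Qf a_def b_def c_def hom fract_poly_nz using assms by simp_all
  have QP: "Q = P + T" unfolding P_def Q_def by (simp add: algebra_simps)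
  have fAe: "\<And>X. fA A B C X = a*X+b+c/X" unfolding fA_def a_def b_def c_def ..
  show ?thesis
    unfolding Let_def T_def[symmetric] a_def[symmetric] b_def[symmetric] c_def[symmetric]
      P_def[symmetric] Q_def[symmetric] fAe
    using gen1[OF nz QP P_def] gen2[OF nz QP P_def] by simp
qed

end
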